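(* Let $a(z),b(z)\in\mathbb{C}[z,z^{-1}]$, $k\in\mathbb{Z}$, and $\sigma,\tau\in\{-1,1\}$, and let \[ I=\frac{1}{2}\left\|\left(a+\sigma z^k\overline{\widetilde{a}}\right)\left(b+\tau z^k\overline{\widetilde{b}}\right)\right\|_2^2+\frac{1}{2}\left\|\left(\widetilde{a}-\sigma z^k\overline{a}\right)\left(\widetilde{b}-\tau z^k\overline{b}\right)\right\|_2^2. \] Then \[ I=2\|ab\|_2^2+2\|a\widetilde{b}\|_2^2+2\sigma\tau\operatorname{Re}\int a\widetilde{a}\,\overline{b\widetilde{b}}+2\sigma\tau\operatorname{Re}\int z^{-2k}a\widetilde{a}b\widetilde{b}. \]
   Context: For a Laurent polynomial $a(z)=\sum_ja_jz^j\in\mathbb{C}[z,z^{-1}]$: $\widetilde{a}(z)=a(-z)$; $\overline{a}=\overline{a(z)}=\sum_j\overline{a_j}z^{-j}$ (its conjugate on the complex unit circle); $\int a$ denotes the constant coefficient $a_0=\frac{1}{2\pi}\int_0^{2\pi}a(e^{i\theta})d\theta$; and $\|a\|_2^2=\frac{1}{2\pi}\int_0^{2\pi}|a(e^{i\theta})|^2d\theta=\sum_j|a_j|^2$. *)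

theory Defs
  imports Complex_Main
begin

text \<open>Laurent polynomials in C[z,z^-1] are represented by their coefficient
  functions int => complex with finite support (predicate lpoly).\<close>

definition lpoly :: "(int \<Rightarrow> complex) \<Rightarrow> bool" where
  "lpoly a \<longleftrightarrow> finite {j. a j \<noteq> 0}"

definition lmul :: "(int \<Rightarrow> complex) \<Rightarrow> (int \<Rightarrow> complex) \<Rightarrow> (int \<Rightarrow> complex)" where
  "lmul a b = (\<lambda>n. \<Sum>j\<in>{j. a j \<noteq> 0}. a j * b (n - j))"

definition lmono :: "int \<Rightarrow> (int \<Rightarrow> complex)" where
  "lmono k = (\<lambda>j. if j = k then 1 else 0)"

text \<open>tilde a (z) = a(-z)\<close>
definition ltilde :: "(int \<Rightarrow> complex) \<Rightarrow> (int \<Rightarrow> complex)" where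
  "ltilde a = (\<lambda>j. ((-1::complex) powi j) * a j)"

definition lbar :: "(int \<Rightarrow> complex) \<Rightarrow> (int \<Rightarrow> complex)" where
  "lbar a = (\<lambda>j. cnj (a (- j)))"

text \<open>integral = constant coefficient\<close>
definition lint :: "(int \<Rightarrow> complex) \<Rightarrow> complex" where
  "lint a = a 0"

text \<open>L2 norm on the unit circle = sqrt of sum of squared moduli of coefficients\<close>
definition lnorm2 :: "(int \<Rightarrow> complex) \<Rightarrow> real" where
  "lnorm2 a = sqrt (\<Sum>j\<in>{j. a j \<noteq> 0}. (cmod (a j))^2)"

end

theory Submission imports Defs "HOL-Library.Poly_Mapping" begin

lemma lmul_lookup: "lmul (Poly_Mapping.lookup p) (Poly_Mapping.lookup q) = Poly_Mapping.lookup (p * q)"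
proof
  fix n
  have "Poly_Mapping.lookup (p*q) n = Sum_any (\<lambda>l. Poly_Mapping.lookup p l * Sum_any (\<lambda>r. Poly_Mapping.lookup q r when n = l + r))"
    by (simp only: lookup_mult)
  also have "\<dots> = Sum_any (\<lambda>l. Poly_Mapping.lookup p l * Poly_Mapping.lookup q (n - l))"
  proof -
    have "Sum_any (\<lambda>r. Poly_Mapping.lookup q r when n = l + r) = Poly_Mapping.lookup q (n - l)" for l
    proof -
      have "(\<lambda>r. Poly_Mapping.lookup q r when n = l + r) = (\<lambda>r. if r = n - l then Poly_Mapping.lookup q r else 0)"
        by (auto simp: when_def fun_eq_iff)
      then show ?thesis by (simp only: Sum_any.delta)
    qed
    then show ?thesis by simp
  qed
  also have "\<dots> = (\<Sum>l\<in>{j. Poly_Mapping.lookup p j \<noteq> 0}. Poly_Mapping.lookup p l * Poly_Mapping.lookup q (n - l))"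
    by (rule Sum_any.expand_superset) auto
  finally show "lmul (Poly_Mapping.lookup p) (Poly_Mapping.lookup q) n = Poly_Mapping.lookup (p * q) n"
    by (simp add: lmul_def)
qed

abbreviation lk where "lk \<equiv> Poly_Mapping.lookup"

lemma m1: "(-1::complex) powi j = (if even j then 1 else -1)"
  by (simp add: power_int_minus_left)

definition pbar :: "(int \<Rightarrow>\<^sub>0 complex) \<Rightarrow> (int \<Rightarrow>\<^sub>0 complex)" where
  "pbar p = Abs_poly_mapping (lbar (lk p))"
definition ptl :: "(int \<Rightarrow>\<^sub>0 complex) \<Rightarrow> (int \<Rightarrow>\<^sub>0 complex)" where
  "ptl p = Abs_poly_mapping (ltilde (lk p))"

lemma lk_pbar: "lk (pbar p) = lbar (lk p)"
proof -
  have "{j. lbar (lk p) j \<noteq> 0} = uminus ` {j. lk p j \<noteq> 0}"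
    apply (auto simp: lbar_def image_iff)
    by (metis minus_minus)
  then have "finite {j. lbar (lk p) j \<noteq> 0}" by simp
  then show ?thesis by (simp add: pbar_def)
qed

lemma lk_ptl: "lk (ptl p) = ltilde (lk p)"
proof -
  have "{j. ltilde (lk p) j \<noteq> 0} \<subseteq> {j. lk p j \<noteq> 0}"
    by (auto simp: ltilde_def)
  then have "finite {j. ltilde (lk p) j \<noteq> 0}" by (rule finite_subset) simp
  then show ?thesis by (simp add: ptl_def)
qed

lemma pbar_add: "pbar (p + q) = pbar p + pbar q"
  by (rule poly_mapping_eqI) (simp add: lk_pbar lookup_add lbar_def)
lemma pbar_diff: "pbar (p - q) = pbar p - pbar q"
  by (rule poly_mapping_eqI) (simp add: lk_pbar lookup_minus lbar_def)
lemma ptl_add: "ptl (p + q) = ptl p + ptl q"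
  by (rule poly_mapping_eqI) (simp add: lk_ptl lookup_add ltilde_def algebra_simps)
lemma ptl_diff: "ptl (p - q) = ptl p - ptl q"
  by (rule poly_mapping_eqI) (simp add: lk_ptl lookup_minus ltilde_def algebra_simps)
lemma pbar_pbar: "pbar (pbar p) = p"
  by (rule poly_mapping_eqI) (simp add: lk_pbar lbar_def)
lemma ptl_ptl: "ptl (ptl p) = p"
  by (rule poly_mapping_eqI) (simp add: lk_ptl ltilde_def)
lemma ptl_pbar: "ptl (pbar p) = pbar (ptl p)"
  by (rule poly_mapping_eqI) (simp add: lk_ptl lk_pbar ltilde_def lbar_def m1)
lemma pbar_single: "pbar (Poly_Mapping.single k 1) = Poly_Mapping.single (-k) 1"
  by (rule poly_mapping_eqI) (simp add: lk_pbar lbar_def lookup_single when_def)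
lemma single_inv: "Poly_Mapping.single (k::int) (1::complex) * Poly_Mapping.single (-k) 1 = 1"
  by (simp add: mult_single)
lemma lk_pbar0: "lk (pbar p) 0 = cnj (lk p 0)"
  by (simp add: lk_pbar lbar_def)
lemma lk_ptl0: "lk (ptl p) 0 = lk p 0"
  by (simp add: lk_ptl ltilde_def)

lemma lk_of_int: "lk (of_int c * (p :: int \<Rightarrow>\<^sub>0 complex)) j = of_int c * lk p j"
proof (cases "c = 0")
  case True then show ?thesis by simp
next
  case False
  have "lk (of_int c * p) j = lmul (lk (of_int c)) (lk p) j"
    by (simp add: lmul_lookup)
  also have "\<dots> = (\<Sum>l\<in>{0}. lk (of_int c) l * lk p (j - l))"
    unfolding lmul_def using False by (intro sum.cong) (auto simp: lookup_of_int when_def)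
  also have "\<dots> = of_int c * lk p j" by (simp add: lookup_of_int)
  finally show ?thesis .
qed

lemma pbar_of_int: "pbar (of_int c) = of_int c"
  by (rule poly_mapping_eqI) (simp add: lk_pbar lbar_def lookup_of_int when_def)
lemma ptl_of_int: "ptl (of_int c) = of_int c"
  by (rule poly_mapping_eqI) (simp add: lk_ptl ltilde_def lookup_of_int when_def)

lemma pbar_mult: "pbar (p * q) = pbar p * pbar q"
proof (rule poly_mapping_eqI)
  fix j
  have "lk (pbar (p * q)) j = cnj (\<Sum>l\<in>{l. lk p l \<noteq> 0}. lk p l * lk q (- j - l))"
    by (simp add: lk_pbar lbar_def lmul_lookup[symmetric] lmul_def)
  also have "\<dots> = (\<Sum>l\<in>{l. lk p l \<noteq> 0}. cnj (lk p l) * cnj (lk q (- j - l)))"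
    by simp
  also have "\<dots> = (\<Sum>l\<in>{l. lbar (lk p) l \<noteq> 0}. lbar (lk p) l * lbar (lk q) (j - l))"
    by (rule sum.reindex_bij_witness[of _ uminus uminus]) (auto simp: lbar_def)
  also have "\<dots> = lk (pbar p * pbar q) j"
    by (simp add: lk_pbar lmul_lookup[symmetric] lmul_def)
  finally show "lk (pbar (p * q)) j = lk (pbar p * pbar q) j" .
qed

lemma ptl_mult: "ptl (p * q) = ptl p * ptl q"
proof (rule poly_mapping_eqI)
  fix j
  have "lk (ptl (p * q)) j = (-1) powi j * (\<Sum>l\<in>{l. lk p l \<noteq> 0}. lk p l * lk q (j - l))"
    by (simp add: lk_ptl ltilde_def lmul_lookup[symmetric] lmul_def)
  also have "\<dots> = (\<Sum>l\<in>{l. lk p l \<noteq> 0}. ((-1) powi l * lk p l) * ((-1) powi (j - l) * lk q (j - l)))"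
    by (auto simp: sum_distrib_left m1 intro!: sum.cong)
  also have "\<dots> = (\<Sum>l\<in>{l. ltilde (lk p) l \<noteq> 0}. ltilde (lk p) l * ltilde (lk q) (j - l))"
    by (simp add: ltilde_def m1)
  also have "\<dots> = lk (ptl p * ptl q) j"
    by (simp add: lk_ptl lmul_lookup[symmetric] lmul_def)
  finally show "lk (ptl (p * q)) j = lk (ptl p * ptl q) j" .
qed

lemma norm_lk: "(lnorm2 (lk p))^2 = Re (lk (p * pbar p) 0)"
proof -
  have "lk (p * pbar p) 0 = (\<Sum>l\<in>{l. lk p l \<noteq> 0}. lk p l * cnj (lk p l))"
    by (simp add: lk_pbar lbar_def lmul_lookup[symmetric] lmul_def)
  also have "\<dots> = (\<Sum>l\<in>{l. lk p l \<noteq> 0}. complex_of_real ((cmod (lk p l))^2))"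
    by (intro sum.cong refl) (metis complex_norm_square)
  finally have "Re (lk (p * pbar p) 0) = (\<Sum>l\<in>{l. lk p l \<noteq> 0}. (cmod (lk p l))^2)"
    by (simp add: Re_sum)
  moreover have "(lnorm2 (lk p))^2 = (\<Sum>l\<in>{l. lk p l \<noteq> 0}. (cmod (lk p l))^2)"
    unfolding lnorm2_def by (rule real_sqrt_pow2) (simp add: sum_nonneg)
  ultimately show ?thesis by simp
qed

lemma lmono_lk: "lmono k = lk (Poly_Mapping.single k 1)"
  by (auto simp: lmono_def lookup_single when_def fun_eq_iff)

lemma lam_add: "(\<lambda>j. lk p j + of_int c * lk q j) = lk (p + of_int c * (q :: int \<Rightarrow>\<^sub>0 complex))"
  by (auto simp: fun_eq_iff lookup_add lk_of_int)
lemma lam_diff: "(\<lambda>j. lk p j - of_int c * lk q j) = lk (p - of_int c * (q :: int \<Rightarrow>\<^sub>0 complex))"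
  by (auto simp: fun_eq_iff lookup_minus lk_of_int)

lemma main:
  fixes A B :: "int \<Rightarrow>\<^sub>0 complex" and k \<sigma> \<tau> :: int
  assumes "\<sigma> \<in> {-1, 1}" and "\<tau> \<in> {-1, 1}"
  defines "a \<equiv> lk A" and "b \<equiv> lk B"
  shows "1/2 * (lnorm2 (lmul (\<lambda>j. a j + of_int \<sigma> * lmul (lmono k) (lbar (ltilde a)) j)
                            (\<lambda>j. b j + of_int \<tau> * lmul (lmono k) (lbar (ltilde b)) j)))^2
       + 1/2 * (lnorm2 (lmul (\<lambda>j. ltilde a j - of_int \<sigma> * lmul (lmono k) (lbar a) j)
                            (\<lambda>j. ltilde b j - of_int \<tau> * lmul (lmono k) (lbar b) j)))^2
       = 2 * (lnorm2 (lmul a b))^2 + 2 * (lnorm2 (lmul a (ltilde b)))^2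
         + 2 * of_int (\<sigma> * \<tau>) * Re (lint (lmul (lmul a (ltilde a)) (lbar (lmul b (ltilde b)))))
         + 2 * of_int (\<sigma> * \<tau>) * Re (lint (lmul (lmono (-2 * k))
                 (lmul (lmul (lmul a (ltilde a)) b) (ltilde b))))"
proof -
  define m :: "int \<Rightarrow>\<^sub>0 complex" where "m = Poly_Mapping.single k 1"
  define mi :: "int \<Rightarrow>\<^sub>0 complex" where "mi = Poly_Mapping.single (-k) 1"
  define s :: "int \<Rightarrow>\<^sub>0 complex" where "s = of_int \<sigma>"
  define t :: "int \<Rightarrow>\<^sub>0 complex" where "t = of_int \<tau>"
  define X1 where "X1 = (A + s * (m * pbar (ptl A))) * (B + t * (m * pbar (ptl B)))"
  define X2 where "X2 = (ptl A - s * (m * pbar A)) * (ptl B - t * (m * pbar B))"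
  define P1 where "P1 = (A * B) * pbar (A * B)"
  define P2 where "P2 = (A * ptl B) * pbar (A * ptl B)"
  define P3 where "P3 = (A * ptl A) * pbar (B * ptl B)"
  define P4 where "P4 = (mi * mi) * (A * ptl A * B * ptl B)"
  define c where "c p = Re (lk p (0::int))" for p :: "int \<Rightarrow>\<^sub>0 complex"
  have mmi: "m * mi = 1" unfolding m_def mi_def by (rule single_inv)
  have bm: "pbar m = mi" "pbar mi = m" unfolding m_def mi_def by (simp_all add: pbar_single)
  have ss: "s * s = 1" "t * t = 1" using assms(1,2) unfolding s_def t_def
    by (auto simp flip: of_int_mult)
  have bs: "pbar s = s" "pbar t = t" "ptl s = s" "ptl t = t"
    unfolding s_def t_def by (simp_all add: pbar_of_int ptl_of_int)
  have st: "of_int (\<sigma> * \<tau>) = s * t" unfolding s_def t_def by simp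
  have sm2: "Poly_Mapping.single (-2 * k) (1::complex) = mi * mi"
    unfolding mi_def by (simp add: mult_single)
  have e1: "lmul (\<lambda>j. a j + of_int \<sigma> * lmul (lmono k) (lbar (ltilde a)) j)
                 (\<lambda>j. b j + of_int \<tau> * lmul (lmono k) (lbar (ltilde b)) j) = lk X1"
    unfolding X1_def a_def b_def s_def t_def m_def
    by (simp add: lmono_lk lk_ptl[symmetric] lk_pbar[symmetric] lmul_lookup lam_add)
  have e2: "lmul (\<lambda>j. ltilde a j - of_int \<sigma> * lmul (lmono k) (lbar a) j)
                 (\<lambda>j. ltilde b j - of_int \<tau> * lmul (lmono k) (lbar b) j) = lk X2"
    unfolding X2_def a_def b_def s_def t_def m_def
    by (simp add: lmono_lk lk_ptl[symmetric] lk_pbar[symmetric] lmul_lookup lam_diff)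
  have e3: "(lnorm2 (lmul a b))^2 = c P1"
    unfolding P1_def a_def b_def c_def by (simp add: lmul_lookup norm_lk)
  have e4: "(lnorm2 (lmul a (ltilde b)))^2 = c P2"
    unfolding P2_def a_def b_def c_def by (simp add: lmul_lookup norm_lk lk_ptl[symmetric])
  have e5: "Re (lint (lmul (lmul a (ltilde a)) (lbar (lmul b (ltilde b))))) = c P3"
    unfolding P3_def a_def b_def c_def lint_def
    by (simp add: lmul_lookup lk_ptl[symmetric] lk_pbar[symmetric])
  have e6: "Re (lint (lmul (lmono (-2 * k)) (lmul (lmul (lmul a (ltilde a)) b) (ltilde b)))) = c P4"
    unfolding P4_def a_def b_def c_def lint_def
    by (simp add: lmul_lookup lk_ptl[symmetric] lmono_lk sm2 del: mult_minus_left)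
  have key: "X1 * pbar X1 + X2 * pbar X2 = (P1 + P2 + ptl P1 + ptl P2) + (P1 + P2 + ptl P1 + ptl P2)
      + (s * t) * (P3 + P4 + pbar P3 + pbar P4) + (s * t) * (P3 + P4 + pbar P3 + pbar P4)"
    unfolding X1_def X2_def P1_def P2_def P3_def P4_def
    apply (simp only: pbar_mult pbar_add pbar_diff ptl_mult ptl_add ptl_diff pbar_pbar ptl_ptl ptl_pbar bm bs)
    using mmi ss by algebra
  have ck: "c (X1 * pbar X1 + X2 * pbar X2) = 2 * (2 * c P1 + 2 * c P2 + 2 * of_int (\<sigma> * \<tau>) * c P3 + 2 * of_int (\<sigma> * \<tau>) * c P4)"
    unfolding key c_def st[symmetric]
    apply (simp only: lookup_add lk_of_int lk_ptl0 lk_pbar0)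
    by (simp add: algebra_simps)
  show ?thesis
    unfolding e1 e2 e3 e4 e5 e6 norm_lk
    using ck unfolding c_def by (simp add: lookup_add)
qed

theorem lemma2p10:
  fixes a b :: "int \<Rightarrow> complex" and k \<sigma> \<tau> :: int
  assumes "lpoly a" and "lpoly b"
    and "\<sigma> \<in> {-1, 1}" and "\<tau> \<in> {-1, 1}"
  shows "1/2 * (lnorm2 (lmul (\<lambda>j. a j + of_int \<sigma> * lmul (lmono k) (lbar (ltilde a)) j)
                            (\<lambda>j. b j + of_int \<tau> * lmul (lmono k) (lbar (ltilde b)) j)))^2
       + 1/2 * (lnorm2 (lmul (\<lambda>j. ltilde a j - of_int \<sigma> * lmul (lmono k) (lbar a) j)
                            (\<lambda>j. ltilde b j - of_int \<tau> * lmul (lmono k) (lbar b) j)))^2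
       = 2 * (lnorm2 (lmul a b))^2 + 2 * (lnorm2 (lmul a (ltilde b)))^2
         + 2 * of_int (\<sigma> * \<tau>) * Re (lint (lmul (lmul a (ltilde a)) (lbar (lmul b (ltilde b)))))
         + 2 * of_int (\<sigma> * \<tau>) * Re (lint (lmul (lmono (-2 * k))
                 (lmul (lmul (lmul a (ltilde a)) b) (ltilde b))))"
proof -
  have fa: "finite {j. a j \<noteq> 0}" and fb: "finite {j. b j \<noteq> 0}"
    using assms(1,2) by (simp_all add: lpoly_def)
  have ha: "a = lk (Abs_poly_mapping a)" using fa by simp
  have hb: "b = lk (Abs_poly_mapping b)" using fb by simp
  show ?thesis
    using main[where A="Abs_poly_mapping a" and B="Abs_poly_mapping b" and k=k, OF assms(3,4)]
    by (simp only: ha[symmetric] hb[symmetric])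
qed

end
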